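(* Let $m\in\mathbb N$ and $j\in\{1,2\}$. Then $r(T_m',T_{m+1}^j)=2m-4$ if $m$ is odd and $m\ge 9$, and $r(T_m',T_{m+1}^j)=2m-5$ if $m$ is even and $m\ge 16$. Moreover, if $n\in\mathbb N$, $m\ge 7$, $n\ge\max\{m+2,\,19-m\}$ and $m-1\nmid (n-4)$, then $r(T_m',T_n^j)=m+n-5$.
   Context: All graphs are finite and simple; a graph "contains" $H$ if it has a subgraph isomorphic to $H$. For graphs $G_1,G_2$, the Ramsey number $r(G_1,G_2)$ is the smallest positive integer $N$ such that for every graph $G$ on $N$ vertices, either $G$ contains a copy of $G_1$ or the complement $\overline G$ contains a copy of $G_2$. For $n\ge 5$, $T_n^1$ is the tree with vertex set $\{v_0,\ldots,v_{n-1}\}$ and edges $v_0v_1,\ldots,v_0v_{n-3},v_{n-4}v_{n-2},v_{n-3}v_{n-1}$, and $T_n^2$ is the tree on the same vertex set with edges $v_0v_1,\ldots,v_0v_{n-3},v_{n-3}v_{n-2},v_{n-3}v_{n-1}$. For $m\ge 4$, $T_m'$ is the unique (up to isomorphism) tree on $m$ vertices with maximum degree $m-2$. *)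

theory Defs
  imports Main
begin

type_synonym graph = "nat set \<times> nat set set"

definition all_pairs :: "nat set \<Rightarrow> nat set set" where
  "all_pairs V = {{u, v} | u v. u \<in> V \<and> v \<in> V \<and> u \<noteq> v}"

definition simple_graph :: "graph \<Rightarrow> bool" where
  "simple_graph G \<longleftrightarrow> finite (fst G) \<and> snd G \<subseteq> all_pairs (fst G)"

definition complement :: "graph \<Rightarrow> graph" where
  "complement G = (fst G, all_pairs (fst G) - snd G)"

definition contains :: "graph \<Rightarrow> graph \<Rightarrow> bool" where
  "contains G H \<longleftrightarrow> (\<exists>f. inj_on f (fst H) \<and> f ` fst H \<subseteq> fst G \<and>
                         (\<forall>e \<in> snd H. f ` e \<in> snd G))"

text \<open>Ramsey number: the least positive N such that every graph on N vertices
(w.l.o.g. on vertex set {0..<N}) contains G1 or its complement contains G2.\<close>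
definition ramsey :: "graph \<Rightarrow> graph \<Rightarrow> nat" where
  "ramsey G1 G2 = (LEAST N. N > 0 \<and>
     (\<forall>E. simple_graph ({0..<N}, E) \<longrightarrow>
          contains ({0..<N}, E) G1 \<or> contains (complement ({0..<N}, E)) G2))"

definition T1 :: "nat \<Rightarrow> graph" where
  "T1 n = ({0..<n}, {{0, i} | i. 1 \<le> i \<and> i \<le> n - 3} \<union> {{n - 4, n - 2}, {n - 3, n - 1}})"

definition T2 :: "nat \<Rightarrow> graph" where
  "T2 n = ({0..<n}, {{0, i} | i. 1 \<le> i \<and> i \<le> n - 3} \<union> {{n - 3, n - 2}, {n - 3, n - 1}})"

definition Tj :: "nat \<Rightarrow> nat \<Rightarrow> graph" where
  "Tj j n = (if j = 1 then T1 n else T2 n)"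

text \<open>T_m': the (unique up to isomorphism) tree on m vertices with maximum degree m-2:
a star with centre 0 and leaves 1..m-2, plus the vertex m-1 joined to the leaf 1.\<close>
definition Tprime :: "nat \<Rightarrow> graph" where
  "Tprime m = ({0..<m}, {{0, i} | i. 1 \<le> i \<and> i \<le> m - 2} \<union> {{1, m - 1}})"

end

theory Submission imports Defs begin

definition nb :: "nat set set \<Rightarrow> nat \<Rightarrow> nat set" where
  "nb E x = {y. {x, y} \<in> E}"

definition hb :: "nat set \<Rightarrow> nat set set \<Rightarrow> nat \<Rightarrow> nat set" where
  "hb V E x = {y \<in> V. y \<noteq> x \<and> {x, y} \<notin> E}"

lemma all_pairs_iff: "{x, y} \<in> all_pairs V \<longleftrightarrow> x \<in> V \<and> y \<in> V \<and> x \<noteq> y"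
  unfolding all_pairs_def by (auto simp: doubleton_eq_iff)

lemma all_pairs_mono: "V \<subseteq> W \<Longrightarrow> all_pairs V \<subseteq> all_pairs W"
  unfolding all_pairs_def by blast

lemma nb_sym: "y \<in> nb E x \<longleftrightarrow> x \<in> nb E y"
  unfolding nb_def by (simp add: insert_commute)

lemma hb_sym: "x \<in> V \<Longrightarrow> y \<in> V \<Longrightarrow> y \<in> hb V E x \<longleftrightarrow> x \<in> hb V E y"
  unfolding hb_def by (auto simp add: insert_commute)

lemma nb_sub: "simple_graph (V, E) \<Longrightarrow> nb E x \<subseteq> V - {x}"
proof
  fix y assume s: "simple_graph (V, E)" and y: "y \<in> nb E x"
  then have "{x, y} \<in> all_pairs V" unfolding nb_def simple_graph_def by auto
  then show "y \<in> V - {x}" using all_pairs_iff by auto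
qed

lemma nb_in: "simple_graph (V, E) \<Longrightarrow> y \<in> nb E x \<Longrightarrow> x \<in> V \<and> y \<in> V \<and> x \<noteq> y"
  using nb_sub[of V E x] nb_sub[of V E y] nb_sym[of y E x] by blast

lemma hb_eq: "simple_graph (V, E) \<Longrightarrow> x \<in> V \<Longrightarrow> hb V E x = V - {x} - nb E x"
  unfolding hb_def nb_def by auto

lemma card_hb: "simple_graph (V, E) \<Longrightarrow> x \<in> V \<Longrightarrow> card (hb V E x) = card V - 1 - card (nb E x)"
proof -
  assume s: "simple_graph (V, E)" and x: "x \<in> V"
  have f: "finite V" using s by (simp add: simple_graph_def)
  have "card (V - {x} - nb E x) = card (V - {x}) - card (nb E x)"
    using nb_sub[OF s, of x] f by (intro card_Diff_subset) (auto intro: finite_subset)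
  then show ?thesis using hb_eq[OF s x] x f by simp
qed

lemma finite_nb: "simple_graph (V, E) \<Longrightarrow> finite (nb E x)"
  using nb_sub[of V E x] unfolding simple_graph_def by (auto intro: finite_subset)

lemma compl_edge: "y \<in> hb V E x \<Longrightarrow> x \<in> V \<Longrightarrow> {x, y} \<in> all_pairs V - E"
  unfolding hb_def using all_pairs_iff by auto

lemma contains_list:
  assumes "distinct xs" "set xs \<subseteq> V" "fst H = {0..<length xs}"
    "\<forall>e \<in> snd H. nth xs ` e \<in> F"
  shows "contains (V, F) H"
  unfolding contains_def 
proof (intro exI[of _ "nth xs"] conjI)
  show "inj_on (nth xs) (fst H)" using assms inj_on_nth[of xs "{0..<length xs}"] by simp
  show "nth xs ` fst H \<subseteq> fst (V, F)" using assms(2,3) nth_mem by fastforce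
  show "\<forall>e\<in>snd H. nth xs ` e \<in> snd (V, F)" using assms(4) by simp
qed

lemma Tp_emb:
  assumes s: "simple_graph (V, E)" and m: "m \<ge> 4"
    and x: "x \<in> nb E v" and rs: "distinct rs" "set rs \<subseteq> nb E v" "length rs = m - 3" "x \<notin> set rs"
    and y: "y \<in> nb E x" "y \<noteq> v" "y \<notin> set rs"
  shows "contains (V, E) (Tprime m)"
proof -
  define xs where "xs = v # x # rs @ [y]"
  have vV: "v \<in> V" and xv: "x \<noteq> v" using nb_in[OF s x] by auto
  have yx: "y \<noteq> x" using nb_in[OF s y(1)] by auto
  have vrs: "v \<notin> set rs" using rs(2) nb_in[OF s] by blast
  have len: "length xs = m" using rs(3) m by (simp add: xs_def)
  have dist: "distinct xs" using rs xv yx y vrs by (auto simp: xs_def)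
  have setV: "set xs \<subseteq> V" using rs(2) nb_in[OF s] x y vV by (auto simp: xs_def)
  have e1: "{v, xs ! i} \<in> E" if i1: "1 \<le> i" and i2: "i \<le> m - 2" for i
  proof -
    obtain k where k: "i = Suc k" using i1 by (cases i) auto
    have klt: "k < length (x # rs)" using k i2 rs(3) m by simp
    have "xs ! i = ((x # rs) @ [y]) ! k" by (simp add: xs_def k)
    also have "\<dots> = (x # rs) ! k" using klt by (metis nth_append)
    also have "\<dots> \<in> nb E v" using nth_mem[OF klt] x rs(2) by auto
    finally show ?thesis by (simp add: nb_def)
  qed
  have e2: "{xs ! 1, xs ! (m - 1)} \<in> E"
  proof -
    have "xs ! 1 = x" by (simp add: xs_def)
    moreover have "xs ! (m - 1) = y" using len by (metis last_conv_nth xs_def last_snoc append_Cons list.distinct(1) diff_Suc_1 length_Cons zero_less_diff)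
    ultimately show ?thesis using y(1) by (simp add: nb_def)
  qed
  show ?thesis
  proof (rule contains_list[OF dist setV])
    show "fst (Tprime m) = {0..<length xs}" using len by (simp add: Tprime_def)
    show "\<forall>e\<in>snd (Tprime m). (!) xs ` e \<in> E"
      using e1 e2 by (auto simp: Tprime_def xs_def)
  qed
qed

lemma pick_list:
  assumes "k \<le> card S"
  obtains rs where "distinct rs" "set rs \<subseteq> S" "length rs = k"
proof -
  obtain R where R: "R \<subseteq> S" "card R = k" "finite R" using obtain_subset_with_card_n[OF assms] by blast
  obtain rs where rs: "distinct rs" "set rs = R" using finite_distinct_list[OF R(3)] by blast
  have "length rs = k" using distinct_card[OF rs(1)] rs(2) R(2) by simp
  then show ?thesis using that rs R by blast
qed

lemma nth_tail4: "(u # rs @ [a, b, c, d]) ! (Suc (length rs + k)) = [a, b, c, d] ! k"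
  by (simp add: nth_append)

lemma nth_tail3: "(u # rs @ [a, c, d]) ! (Suc (length rs + k)) = [a, c, d] ! k"
  by (simp add: nth_append)

lemma T1_emb:
  assumes s: "simple_graph (V, E)" and n: "n \<ge> 5" and u: "u \<in> V"
    and ab: "a \<in> hb V E u" "b \<in> hb V E u" "a \<noteq> b"
    and cd: "c \<in> hb V E a" "d \<in> hb V E b" "c \<noteq> d" "c \<notin> {u, a, b}" "d \<notin> {u, a, b}"
    and card: "card (hb V E u - {c, d}) \<ge> n - 3"
  shows "contains (V, all_pairs V - E) (T1 n)"
proof -
  have fV: "finite V" using s by (simp add: simple_graph_def)
  have fin: "finite (hb V E u - {c, d})" using fV by (auto simp: hb_def)
  have "card (hb V E u - {c, d} - {a, b}) = card (hb V E u - {c, d}) - card {a, b}"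
    using ab cd by (intro card_Diff_subset) auto
  then have "card (hb V E u - {c, d} - {a, b}) \<ge> n - 5" using card ab(3) by simp
  then obtain rs where rs: "distinct rs" "set rs \<subseteq> hb V E u - {c, d} - {a, b}" "length rs = n - 5"
    using pick_list by blast
  define xs where "xs = u # rs @ [a, b, c, d]"
  have hbV: "\<And>x z. z \<in> hb V E x \<Longrightarrow> z \<in> V \<and> z \<noteq> x" by (auto simp: hb_def)
  have aV: "a \<in> V" "b \<in> V" "c \<in> V" "d \<in> V" using ab cd hbV by auto
  have len: "length xs = n" using rs(3) n by (simp add: xs_def)
  have ua: "u \<noteq> a" "u \<noteq> b" using ab hbV by auto
  have urs: "u \<notin> set rs" using rs(2) hbV by blast
  have dist: "distinct xs" using rs ab cd ua urs by (auto simp: xs_def)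
  have setV: "set xs \<subseteq> V" using rs(2) hbV u aV by (auto simp: xs_def)
  have e1: "{u, xs ! i} \<in> all_pairs V - E" if i1: "1 \<le> i" and i2: "i \<le> n - 3" for i
  proof -
    obtain k where k: "i = Suc k" using i1 by (cases i) auto
    have klt: "k < length (rs @ [a, b])" using k i2 rs(3) n by simp
    have "xs ! i = ((rs @ [a, b]) @ [c, d]) ! k" by (simp add: xs_def k)
    also have "\<dots> = (rs @ [a, b]) ! k" using klt by (metis nth_append)
    also have "\<dots> \<in> hb V E u" using nth_mem[OF klt] ab rs(2) by auto
    finally show ?thesis using compl_edge u by blast
  qed
  have l: "length rs = n - 5" by fact
  have i4: "n - 4 = Suc (length rs + 0)" "n - 3 = Suc (length rs + 1)" "n - 2 = Suc (length rs + 2)"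
     "n - 1 = Suc (length rs + 3)" using l n by simp_all
  have x4: "xs ! (n - 4) = a" "xs ! (n - 3) = b" "xs ! (n - 2) = c" "xs ! (n - 1) = d"
    by (simp only: xs_def i4 nth_tail4, simp)+
  have e2: "{xs ! (n - 4), xs ! (n - 2)} \<in> all_pairs V - E" "{xs ! (n - 3), xs ! (n - 1)} \<in> all_pairs V - E"
    using x4 compl_edge cd aV by auto
  show ?thesis
  proof (rule contains_list[OF dist setV])
    show "fst (T1 n) = {0..<length xs}" using len by (simp add: T1_def)
    show "\<forall>e\<in>snd (T1 n). (!) xs ` e \<in> all_pairs V - E"
      using e1 e2 by (auto simp: T1_def xs_def)
  qed
qed

lemma T2_emb:
  assumes s: "simple_graph (V, E)" and n: "n \<ge> 5" and u: "u \<in> V"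
    and a: "a \<in> hb V E u"
    and cd: "c \<in> hb V E a" "d \<in> hb V E a" "c \<noteq> d" "c \<notin> {u, a}" "d \<notin> {u, a}"
    and card: "card (hb V E u - {c, d}) \<ge> n - 3"
  shows "contains (V, all_pairs V - E) (T2 n)"
proof -
  have fV: "finite V" using s by (simp add: simple_graph_def)
  have fin: "finite (hb V E u - {c, d})" using fV by (auto simp: hb_def)
  have "card (hb V E u - {c, d} - {a}) = card (hb V E u - {c, d}) - card {a}"
    using a cd by (intro card_Diff_subset) auto
  then have "card (hb V E u - {c, d} - {a}) \<ge> n - 4" using card by simp
  then obtain rs where rs: "distinct rs" "set rs \<subseteq> hb V E u - {c, d} - {a}" "length rs = n - 4"
    using pick_list by blast
  define xs where "xs = u # rs @ [a, c, d]"
  have hbV: "\<And>x z. z \<in> hb V E x \<Longrightarrow> z \<in> V \<and> z \<noteq> x" by (auto simp: hb_def)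
  have aV: "a \<in> V" "c \<in> V" "d \<in> V" using a cd hbV by auto
  have len: "length xs = n" using rs(3) n by (simp add: xs_def)
  have ua: "u \<noteq> a" using a hbV by auto
  have urs: "u \<notin> set rs" using rs(2) hbV by blast
  have dist: "distinct xs" using rs a cd ua urs by (auto simp: xs_def)
  have setV: "set xs \<subseteq> V" using rs(2) hbV u aV by (auto simp: xs_def)
  have e1: "{u, xs ! i} \<in> all_pairs V - E" if i1: "1 \<le> i" and i2: "i \<le> n - 3" for i
  proof -
    obtain k where k: "i = Suc k" using i1 by (cases i) auto
    have klt: "k < length (rs @ [a])" using k i2 rs(3) n by simp
    have "xs ! i = ((rs @ [a]) @ [c, d]) ! k" by (simp add: xs_def k)
    also have "\<dots> = (rs @ [a]) ! k" using klt by (metis nth_append)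
    also have "\<dots> \<in> hb V E u" using nth_mem[OF klt] a rs(2) by auto
    finally show ?thesis using compl_edge u by blast
  qed
  have l: "length rs = n - 4" by fact
  have i4: "n - 3 = Suc (length rs + 0)" "n - 2 = Suc (length rs + 1)"
     "n - 1 = Suc (length rs + 2)" using l n by simp_all
  have x4: "xs ! (n - 3) = a" "xs ! (n - 2) = c" "xs ! (n - 1) = d"
    by (simp only: xs_def i4 nth_tail3, simp)+
  have e2: "{xs ! (n - 3), xs ! (n - 2)} \<in> all_pairs V - E" "{xs ! (n - 3), xs ! (n - 1)} \<in> all_pairs V - E"
    using x4 compl_edge cd aV by auto
  show ?thesis
  proof (rule contains_list[OF dist setV])
    show "fst (T2 n) = {0..<length xs}" using len by (simp add: T2_def)
    show "\<forall>e\<in>snd (T2 n). (!) xs ` e \<in> all_pairs V - E"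
      using e1 e2 by (auto simp: T2_def xs_def)
  qed
qed

locale noTp =
  fixes V :: "nat set" and E :: "nat set set" and m :: nat
  assumes s: "simple_graph (V, E)" and m4: "m \<ge> 4" and noT: "\<not> contains (V, E) (Tprime m)"
begin

lemma fV: "finite V" using s by (simp add: simple_graph_def)

lemma F1:
  assumes x: "x \<in> nb E v" and d: "card (nb E v) \<ge> m - 1"
  shows "nb E x = {v}"
proof -
  have vx: "v \<in> nb E x" using x nb_sym by blast
  have "y = v" if y: "y \<in> nb E x" for y
  proof (rule ccontr)
    assume yv: "y \<noteq> v"
    have "card (nb E v - {x, y}) \<ge> card (nb E v) - card {x, y}"
      by (rule diff_card_le_card_Diff) simp
    moreover have "card {x, y} \<le> 2" by (simp add: card_insert_le_m1)
    ultimately have "card (nb E v - {x, y}) \<ge> m - 3" using d by linarith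
    then obtain rs where rs: "distinct rs" "set rs \<subseteq> nb E v - {x, y}" "length rs = m - 3"
      using pick_list by blast
    have "contains (V, E) (Tprime m)"
      by (rule Tp_emb[OF s m4 x rs(1) _ rs(3) _ y yv]) (use rs(2) in auto)
    with noT show False by simp
  qed
  then show ?thesis using vx by blast
qed

lemma F2:
  assumes x: "x \<in> nb E v" and d: "card (nb E v) = m - 2" and y: "y \<in> nb E x"
  shows "y \<in> insert v (nb E v)"
proof (rule ccontr)
  assume yn: "y \<notin> insert v (nb E v)"
  have "card (nb E v - {x}) = m - 3" using d x finite_nb[OF s] by simp
  then obtain rs where rs: "distinct rs" "set rs \<subseteq> nb E v - {x}" "length rs = m - 3"
    using pick_list by (metis order_refl)
  have "contains (V, E) (Tprime m)"
    by (rule Tp_emb[OF s m4 x rs(1) _ rs(3) _ y]) (use rs(2) yn in auto)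
  with noT show False by simp
qed

end

lemma pick2:
  assumes "2 \<le> card S"
  obtains x y where "x \<in> S" "y \<in> S" "x \<noteq> y"
proof -
  obtain rs where rs: "distinct rs" "set rs \<subseteq> S" "length rs = 2" using pick_list[OF assms] by blast
  then obtain x y where "rs = [x, y]" by (auto simp: numeral_2_eq_2 length_Suc_conv)
  then show ?thesis using that rs by auto
qed

lemma pick3:
  assumes "3 \<le> card S"
  obtains x y z where "x \<in> S" "y \<in> S" "z \<in> S" "x \<noteq> y" "x \<noteq> z" "y \<noteq> z"
proof -
  obtain rs where rs: "distinct rs" "set rs \<subseteq> S" "length rs = 3" using pick_list[OF assms] by blast
  then obtain x y z where "rs = [x, y, z]" by (auto simp: numeral_3_eq_3 length_Suc_conv)
  then show ?thesis using that rs by auto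
qed

lemma card_minus2:
  assumes "finite A" "c \<in> A" "d \<in> A" "c \<noteq> d"
  shows "card (A - {c, d}) = card A - 2"
  using assms by (simp add: card_Diff_subset)

context noTp begin

lemma caseA:
  assumes v: "card (nb E v) \<ge> m - 1" and N: "card V \<ge> n + 1" and n: "n \<ge> 5"
  shows "contains (V, all_pairs V - E) (T1 n) \<and> contains (V, all_pairs V - E) (T2 n)"
proof -
  have "3 \<le> card (nb E v)" using v m4 by linarith
  then obtain x y z where xyz: "x \<in> nb E v" "y \<in> nb E v" "z \<in> nb E v" "x \<noteq> y" "x \<noteq> z" "y \<noteq> z"
    by (rule pick3)
  have nx: "nb E x = {v}" and ny: "nb E y = {v}" and nz: "nb E z = {v}"
    using F1[OF xyz(1) v] F1[OF xyz(2) v] F1[OF xyz(3) v] by auto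
  have inV: "v \<in> V" "x \<in> V" "y \<in> V" "z \<in> V" "v \<noteq> x" "v \<noteq> y" "v \<noteq> z"
    using nb_in[OF s] xyz by blast+
  have hx: "hb V E x = V - {x, v}" using hb_eq[OF s inV(2)] nx by auto
  have hy: "hb V E y = V - {y, v}" using hb_eq[OF s inV(3)] ny by auto
  have hz: "hb V E z = V - {z, v}" using hb_eq[OF s inV(4)] nz by auto
  have chx: "card (hb V E x) = card V - 2" using hx inV fV by (simp add: card_Diff_subset)
  have "card (V - {x, y, z, v}) = card V - 4" using inV xyz fV by (simp add: card_Diff_subset)
  then have "2 \<le> card (V - {x, y, z, v})" using N n by linarith
  then obtain c d where cd: "c \<in> V - {x, y, z, v}" "d \<in> V - {x, y, z, v}" "c \<noteq> d" by (rule pick2)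
  have fh: "finite (hb V E x)" using hx fV by simp
  have c1: "c \<in> hb V E x" "d \<in> hb V E x" "y \<in> hb V E x" "z \<in> hb V E x"
    using cd hx inV xyz by auto
  have ccard: "card (hb V E x - {c, d}) \<ge> n - 3"
    using card_minus2[OF fh c1(1,2) cd(3)] chx N by linarith
  have c2: "c \<in> hb V E y" "d \<in> hb V E z" "d \<in> hb V E y" using cd hy hz by auto
  have c3: "c \<notin> {x, y, z}" "d \<notin> {x, y, z}" "c \<notin> {x, y}" "d \<notin> {x, y}" using cd by auto
  have t1: "contains (V, all_pairs V - E) (T1 n)"
    by (rule T1_emb[OF s n inV(2) c1(3,4) xyz(6) c2(1,2) cd(3) c3(1,2) ccard])
  have t2: "contains (V, all_pairs V - E) (T2 n)"
    by (rule T2_emb[OF s n inV(2) c1(3) c2(1,3) cd(3) c3(3,4) ccard])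
  show ?thesis using t1 t2 by simp
qed

end

lemma avoid:
  assumes "finite F" "card F < card S"
  obtains x where "x \<in> S" "x \<notin> F"
proof -
  have "\<not> S \<subseteq> F" using card_mono[OF assms(1)] assms(2) by (meson leD)
  then show ?thesis using that by blast
qed

lemma card_minus2_ge:
  assumes "finite A"
  shows "card (A - {c, d}) \<ge> card A - 2"
proof -
  have "card (A - {c, d}) \<ge> card A - card {c, d}" by (rule diff_card_le_card_Diff) simp
  moreover have "card {c, d} \<le> 2" by (cases "c = d") auto
  ultimately show ?thesis by linarith
qed

lemma numeral_le_iff_trans: "(4::nat) \<le> x \<Longrightarrow> 3 \<le> x" by linarith

lemma avoid2:
  assumes "card S \<ge> 3"
  obtains x where "x \<in> S" "x \<notin> {p, q}"
proof -
  have "card {p, q} \<le> 2" by (cases "p = q") auto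
  then have "card {p, q} < card S" using assms by linarith
  then obtain x where "x \<in> S" "x \<notin> {p, q}" using avoid[of "{p, q}" S] by blast
  then show ?thesis using that by blast
qed

lemma avoid3:
  assumes "card S \<ge> 4"
  obtains x where "x \<in> S" "x \<notin> {p, q, r}"
proof -
  have "card {p, q, r} \<le> 3" by (cases "p = q"; cases "p = r"; cases "q = r") (auto simp: insert_commute)
  then have "card {p, q, r} < card S" using assms by linarith
  then obtain x where "x \<in> S" "x \<notin> {p, q, r}" using avoid[of "{p, q, r}" S] by blast
  then show ?thesis using that by blast
qed

context noTp begin

lemma hb_facts: "z \<in> hb V E x \<Longrightarrow> z \<in> V \<and> z \<noteq> x" by (auto simp: hb_def)

lemma fin_hb: "finite (hb V E x)" using fV by (auto simp: hb_def)

lemma centre: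
  assumes u: "u \<in> V" and kH: "\<forall>w\<in>V. card (hb V E w) \<ge> 4"
    and A: "card (hb V E u) \<ge> n - 2" and n: "n \<ge> 5"
    and e: "nb E u = {} \<Longrightarrow> card (hb V E u) \<ge> n - 1"
    and dg: "\<forall>w\<in>V. card (nb E w) \<le> card (hb V E u)"
  shows "contains (V, all_pairs V - E) (T1 n) \<and> contains (V, all_pairs V - E) (T2 n)"
proof (cases "card (hb V E u) \<ge> n - 1")
  case True
  have "2 \<le> card (hb V E u)" using True n by linarith
  then obtain a b where ab: "a \<in> hb V E u" "b \<in> hb V E u" "a \<noteq> b" by (rule pick2)
  have aV: "a \<in> V" "b \<in> V" "a \<noteq> u" "b \<noteq> u" using ab hb_facts by auto
  have ka: "card (hb V E a) \<ge> 4" "card (hb V E b) \<ge> 4" using kH aV by auto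
  obtain c where c: "c \<in> hb V E a" "c \<notin> {u, b}"
    using avoid2[of "hb V E a" u b] numeral_le_iff_trans[OF ka(1)] by blast
  obtain d where d: "d \<in> hb V E b" "d \<notin> {u, a, c}"
    using avoid3[of "hb V E b" u a c] ka(2) by blast
  obtain d' where d': "d' \<in> hb V E a" "d' \<notin> {u, c}"
    using avoid2[of "hb V E a" u c] numeral_le_iff_trans[OF ka(1)] by blast
  have ac: "a \<noteq> c" "b \<noteq> d" "a \<noteq> d'" using c(1) d(1) d'(1) hb_facts by blast+
  have cc: "card (hb V E u - {c, d}) \<ge> n - 3" "card (hb V E u - {c, d'}) \<ge> n - 3"
    using card_minus2_ge[OF fin_hb, of u c d] card_minus2_ge[OF fin_hb, of u c d'] True by linarith+
  have t1: "contains (V, all_pairs V - E) (T1 n)"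
  proof (rule T1_emb[OF s n u ab c(1) d(1) _ _ _ cc(1)])
    show "c \<noteq> d" using d by blast
    show "c \<notin> {u, a, b}" using c ac by blast
    show "d \<notin> {u, a, b}" using d ac by blast
  qed
  have t2: "contains (V, all_pairs V - E) (T2 n)"
  proof (rule T2_emb[OF s n u ab(1) c(1) d'(1) _ _ _ cc(2)])
    show "c \<noteq> d'" using d' by blast
    show "c \<notin> {u, a}" using c ac by blast
    show "d' \<notin> {u, a}" using d' ac by blast
  qed
  show ?thesis using t1 t2 by simp
next
  case False
  then have An: "card (hb V E u) = n - 2" using A by linarith
  then have "nb E u \<noteq> {}" using e False by auto
  then obtain c where c: "c \<in> nb E u" by blast
  have cV: "c \<in> V" "c \<noteq> u" "c \<notin> hb V E u" using nb_in[OF s c] c by (auto simp: hb_def nb_def)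
  obtain a where a: "a \<in> hb V E u" "c \<notin> nb E a"
  proof (rule ccontr)
    assume "\<not> thesis"
    then have "\<forall>a \<in> hb V E u. c \<in> nb E a" using that by blast
    then have "\<forall>a \<in> hb V E u. a \<in> nb E c" using nb_sym by blast
    moreover have "u \<in> nb E c" using c nb_sym by blast
    moreover have "u \<notin> hb V E u" by (simp add: hb_def)
    ultimately have "insert u (hb V E u) \<subseteq> nb E c" by blast
    then have "card (insert u (hb V E u)) \<le> card (nb E c)" using finite_nb[OF s] by (rule card_mono[rotated])
    then have "card (hb V E u) + 1 \<le> card (nb E c)" using fin_hb \<open>u \<notin> hb V E u\<close> by simp
    moreover have "card (nb E c) \<le> card (hb V E u)" using dg cV(1) by blast
    ultimately show False by linarith
  qed
  have aV: "a \<in> V" "a \<noteq> u" using a hb_facts by auto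
  have ca: "c \<in> hb V E a" using a cV aV unfolding hb_def nb_def by auto
  have ka: "card (hb V E a) \<ge> 4" using kH aV by auto
  have "2 \<le> card (hb V E u)" using An n by linarith
  obtain b1 b2 where "b1 \<in> hb V E u" "b2 \<in> hb V E u" "b1 \<noteq> b2"
    using pick2[OF \<open>2 \<le> card (hb V E u)\<close>] by blast
  then have "\<exists>b \<in> hb V E u. b \<noteq> a" by (cases "b1 = a") auto
  then obtain b where b: "b \<in> hb V E u" "b \<noteq> a" by blast
  have bV: "b \<in> V" "b \<noteq> u" using b hb_facts by auto
  have kb: "card (hb V E b) \<ge> 4" using kH bV by auto
  obtain d where d: "d \<in> hb V E b" "d \<notin> {u, a, c}"
    using avoid3[of "hb V E b" u a c] kb by blast
  obtain d' where d': "d' \<in> hb V E a" "d' \<notin> {u, c}"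
    using avoid2[of "hb V E a" u c] numeral_le_iff_trans[OF ka] by blast
  have ac: "a \<noteq> c" "b \<noteq> d" "a \<noteq> d'" "b \<noteq> c" using ca d(1) d'(1) hb_facts cV a b by blast+
  have cc: "card (hb V E u - {c, d}) \<ge> n - 3" "card (hb V E u - {c, d'}) \<ge> n - 3"
  proof -
    have "hb V E u - {c, d} = hb V E u - {d}" "hb V E u - {c, d'} = hb V E u - {d'}" using cV by auto
    moreover have "card (hb V E u - {x}) \<ge> n - 3" for x using An fin_hb[of u]
      by (cases "x \<in> hb V E u") (auto simp: card_Diff_singleton_if)
    ultimately show "card (hb V E u - {c, d}) \<ge> n - 3" "card (hb V E u - {c, d'}) \<ge> n - 3" by simp_all
  qed
  have t1: "contains (V, all_pairs V - E) (T1 n)"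
  proof (rule T1_emb[OF s n u a(1) b(1) b(2)[symmetric] ca d(1) _ _ _ cc(1)])
    show "c \<noteq> d" using d by blast
    show "c \<notin> {u, a, b}" using cV ac by blast
    show "d \<notin> {u, a, b}" using d ac by blast
  qed
  have t2: "contains (V, all_pairs V - E) (T2 n)"
  proof (rule T2_emb[OF s n u a(1) ca d'(1) _ _ _ cc(2)])
    show "c \<noteq> d'" using d' by blast
    show "c \<notin> {u, a}" using cV ac by blast
    show "d' \<notin> {u, a}" using d' ac by blast
  qed
  show ?thesis using t1 t2 by simp
qed

end

lemma double_count:
  assumes "finite A" "finite B"
  shows "(\<Sum>a\<in>A. card (nb E a \<inter> B)) = (\<Sum>b\<in>B. card (nb E b \<inter> A))"
proof -
  have fa: "\<forall>a\<in>A. finite (nb E a \<inter> B)" "\<forall>b\<in>B. finite (nb E b \<inter> A)" using assms by auto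
  have "(\<Sum>a\<in>A. card (nb E a \<inter> B)) = card (SIGMA a:A. nb E a \<inter> B)"
    using card_SigmaI[OF assms(1) fa(1)] by simp
  also have "(SIGMA a:A. nb E a \<inter> B) = prod.swap ` (SIGMA b:B. nb E b \<inter> A)"
    using nb_sym by (auto simp: image_iff)
  also have "card \<dots> = card (SIGMA b:B. nb E b \<inter> A)"
    by (rule card_image) (simp add: inj_on_def)
  also have "\<dots> = (\<Sum>b\<in>B. card (nb E b \<inter> A))"
    using card_SigmaI[OF assms(2) fa(2)] by simp
  finally show ?thesis .
qed

context noTp begin

lemma sub3:
  assumes u: "u \<in> V" and n: "n \<ge> 5"
    and dB: "\<forall>b\<in>nb E u. card (nb E b) \<le> m - 3"
    and B2: "card (nb E u) \<ge> 2"
    and Am: "card (hb V E u) \<ge> m - 2"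
    and An: "card (hb V E u) \<ge> n - 3"
    and cnt: "card (hb V E u) * (card (nb E u) - 1) > card (nb E u) * (m - 4)"
  shows "contains (V, all_pairs V - E) (T1 n) \<and> contains (V, all_pairs V - E) (T2 n)"
proof -
  define A where "A = hb V E u"
  define B where "B = nb E u"
  have fA: "finite A" "finite B" using fin_hb finite_nb[OF s] by (auto simp: A_def B_def)
  have BV: "\<And>b. b \<in> B \<Longrightarrow> b \<in> V \<and> b \<noteq> u \<and> b \<notin> A"
    using nb_in[OF s] by (auto simp: A_def B_def hb_def nb_def)
  have AV: "\<And>a. a \<in> A \<Longrightarrow> a \<in> V \<and> a \<noteq> u" using hb_facts by (auto simp: A_def)
  have AB: "\<And>a b. a \<in> A \<Longrightarrow> b \<in> B \<Longrightarrow> (b \<in> hb V E a \<longleftrightarrow> b \<notin> nb E a)"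
    using AV BV by (auto simp: hb_def nb_def)
  have nbA: "card (nb E b \<inter> A) \<le> m - 4" if b: "b \<in> B" for b
  proof -
    have "nb E b \<inter> A \<subseteq> nb E b - {u}" using BV AV by auto
    then have "card (nb E b \<inter> A) \<le> card (nb E b - {u})" using finite_nb[OF s] by (intro card_mono) auto
    also have "\<dots> = card (nb E b) - 1" using b nb_sym finite_nb[OF s] by (auto simp: B_def)
    finally show ?thesis using dB b by (auto simp: B_def)
  qed
  have hbA: "card (A - nb E b) \<ge> 2" if b: "b \<in> B" for b
  proof -
    have "card (A - nb E b) = card A - card (A \<inter> nb E b)" using fA(1) by (simp add: card_Diff_subset_Int Diff_Int2)
    then show ?thesis using nbA[OF b] Am m4 by (simp add: A_def Int_commute)
  qed
  have t1: "contains (V, all_pairs V - E) (T1 n)"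
  proof -
    obtain c d where cd: "c \<in> B" "d \<in> B" "c \<noteq> d" using pick2 B2 by (metis B_def)
    obtain a where a: "a \<in> A - nb E c" using hbA[OF cd(1)] by (metis all_not_in_conv card.empty not_numeral_le_zero)
    obtain b1 b2 where "b1 \<in> A - nb E d" "b2 \<in> A - nb E d" "b1 \<noteq> b2" using pick2 hbA[OF cd(2)] by metis
    then obtain b where b: "b \<in> A - nb E d" "b \<noteq> a" by (cases "b1 = a") auto
    have ca: "c \<in> hb V E a" "d \<in> hb V E b" using AB a b cd nb_sym by auto
    have cc: "card (hb V E u - {c, d}) \<ge> n - 3"
    proof -
      have "hb V E u - {c, d} = A" using cd BV by (auto simp: A_def)
      then show ?thesis using An by (simp add: A_def)
    qed
    show ?thesis
    proof (rule T1_emb[OF s n u _ _ b(2)[symmetric] ca cd(3) _ _ cc])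
      show "a \<in> hb V E u" "b \<in> hb V E u" using a b by (auto simp: A_def)
      show "c \<notin> {u, a, b}" "d \<notin> {u, a, b}" using BV cd a b by blast+
    qed
  qed
  have t2: "contains (V, all_pairs V - E) (T2 n)"
  proof (rule ccontr)
    assume nt: "\<not> ?thesis"
    have le1: "card (hb V E a \<inter> B) \<le> 1" if a: "a \<in> A" for a
    proof (rule ccontr)
      assume "\<not> ?thesis"
      then have "2 \<le> card (hb V E a \<inter> B)" by simp
      then obtain c d where cd: "c \<in> hb V E a \<inter> B" "d \<in> hb V E a \<inter> B" "c \<noteq> d" by (rule pick2)
      have cc: "card (hb V E u - {c, d}) \<ge> n - 3"
      proof -
        have "hb V E u - {c, d} = A" using cd BV by (auto simp: A_def)
        then show ?thesis using An by (simp add: A_def)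
      qed
      have "contains (V, all_pairs V - E) (T2 n)"
      proof (rule T2_emb[OF s n u _ _ _ cd(3) _ _ cc])
        show "a \<in> hb V E u" using a by (simp add: A_def)
        show "c \<in> hb V E a" "d \<in> hb V E a" using cd by auto
        show "c \<notin> {u, a}" "d \<notin> {u, a}" using BV cd a by blast+
      qed
      with nt show False by simp
    qed
    have ge: "card (nb E a \<inter> B) \<ge> card B - 1" if a: "a \<in> A" for a
    proof -
      have "B = (nb E a \<inter> B) \<union> (hb V E a \<inter> B)" using AB[OF a] by auto
      then have "card B \<le> card (nb E a \<inter> B) + card (hb V E a \<inter> B)" by (metis card_Un_le)
      then show ?thesis using le1[OF a] by linarith
    qed
    have "card A * (card B - 1) \<le> (\<Sum>a\<in>A. card (nb E a \<inter> B))"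
      using sum_bounded_below[of A "card B - 1" "\<lambda>a. card (nb E a \<inter> B)"] ge by simp
    also have "\<dots> = (\<Sum>b\<in>B. card (nb E b \<inter> A))" by (rule double_count[OF fA])
    also have "\<dots> \<le> card B * (m - 4)"
      using sum_bounded_above[of B "\<lambda>b. card (nb E b \<inter> A)" "m - 4"] nbA by simp
    finally show False using cnt by (simp add: A_def B_def)
  qed
  show ?thesis using t1 t2 by simp
qed

end

definition blk :: "nat set set \<Rightarrow> nat \<Rightarrow> nat set" where
  "blk E v = insert v (nb E v)"

lemma even_sym_card:
  assumes fin: "finite P" and sym: "\<And>a b. (a, b) \<in> P \<Longrightarrow> (b, a) \<in> P" and irr: "\<And>a. (a, a) \<notin> P"
  shows "even (card (P :: (nat \<times> nat) set))"
proof -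
  define P1 where "P1 = {p \<in> P. fst p < snd p}"
  define P2 where "P2 = {p \<in> P. snd p < fst p}"
  have un: "P = P1 \<union> P2" using irr by (auto simp: P1_def P2_def) (metis nat_neq_iff surj_pair)
  have dis: "P1 \<inter> P2 = {}" by (auto simp: P1_def P2_def)
  have sw: "P2 = prod.swap ` P1" using sym by (auto simp: P1_def P2_def image_iff)
  have c2: "card P2 = card P1" unfolding sw by (rule card_image) (auto simp: inj_on_def)
  have "card P = card P1 + card P2" unfolding un using fin un dis
    by (intro card_Un_disjoint) (auto intro: finite_subset)
  then show ?thesis using c2 by simp
qed

context noTp begin

lemma blk_closed:
  assumes v: "card (nb E v) = m - 2" and x: "x \<in> blk E v"
  shows "nb E x \<subseteq> blk E v"
proof
  fix y assume y: "y \<in> nb E x"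
  show "y \<in> blk E v"
  proof (cases "x = v")
    case True then show ?thesis using y by (simp add: blk_def)
  next
    case False
    then have "x \<in> nb E v" using x by (simp add: blk_def)
    then show ?thesis using F2[OF _ v y] by (simp add: blk_def)
  qed
qed

lemma blk_eq:
  assumes v: "card (nb E v) = m - 2" and v': "card (nb E v') = m - 2"
    and w: "w \<in> blk E v" "w \<in> blk E v'"
  shows "blk E v = blk E v'"
proof -
  have sub: "blk E b \<subseteq> blk E a" if a: "card (nb E a) = m - 2" and b: "card (nb E b) = m - 2"
     and wa: "w \<in> blk E a" and wb: "w \<in> blk E b" for a b
  proof -
    have "b \<in> blk E a"
    proof (cases "w = b")
      case True then show ?thesis using wa by simp
    next
      case False
      then have "w \<in> nb E b" using wb by (simp add: blk_def)
      then have "b \<in> nb E w" using nb_sym by blast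
      then show ?thesis using blk_closed[OF a wa] by blast
    qed
    then have "nb E b \<subseteq> blk E a" using blk_closed[OF a] by blast
    then show ?thesis using \<open>b \<in> blk E a\<close> by (simp add: blk_def)
  qed
  show ?thesis using sub[OF v v' w] sub[OF v' v w(2,1)] by blast
qed

lemma card_blk:
  assumes v: "card (nb E v) = m - 2"
  shows "card (blk E v) = m - 1"
proof -
  have "v \<notin> nb E v" using nb_in[OF s] by blast
  then show ?thesis using v finite_nb[OF s] m4 by (simp add: blk_def)
qed

definition Dset where "Dset = {v \<in> V. card (nb E v) = m - 2}"
definition Uset where "Uset = \<Union> (blk E ` Dset)"
definition Wset where "Wset = V - Uset"

lemma blkV: "v \<in> V \<Longrightarrow> blk E v \<subseteq> V" using nb_sub[OF s] by (auto simp: blk_def)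

lemma card_U: "card Uset = (m - 1) * card (blk E ` Dset)"
proof -
  have fD: "finite (blk E ` Dset)" using fV by (simp add: Dset_def)
  have fU: "finite Uset" unfolding Uset_def using blkV fV by (auto simp: Dset_def intro: finite_subset)
  show ?thesis unfolding Uset_def
  proof (rule card_partition[symmetric, OF fD])
    show "finite (\<Union> (blk E ` Dset))" using fU by (simp add: Uset_def)
    show "\<And>c. c \<in> blk E ` Dset \<Longrightarrow> card c = m - 1" using card_blk by (auto simp: Dset_def)
    show "\<And>c1 c2. c1 \<in> blk E ` Dset \<Longrightarrow> c2 \<in> blk E ` Dset \<Longrightarrow> c1 \<noteq> c2 \<Longrightarrow> c1 \<inter> c2 = {}"
      using blk_eq by (auto simp: Dset_def)
  qed
qed

lemma card_VUW: "card V = card Uset + card Wset"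
proof -
  have "Uset \<subseteq> V" unfolding Uset_def using blkV by (auto simp: Dset_def)
  then show ?thesis unfolding Wset_def using fV
    by (metis card_Diff_subset finite_subset le_add_diff_inverse card_mono)
qed

lemma W_deg:
  assumes md: "\<forall>v\<in>V. card (nb E v) \<le> m - 2" and u: "u \<in> Wset"
  shows "card (nb E u) \<le> m - 3"
proof (rule ccontr)
  assume "\<not> ?thesis"
  then have "card (nb E u) = m - 2" using md u m4 by (auto simp: Wset_def)
  then have "u \<in> Dset" using u by (simp add: Dset_def Wset_def)
  then have "u \<in> Uset" by (auto simp: Uset_def blk_def)
  then show False using u by (simp add: Wset_def)
qed

lemma W_closed:
  assumes u: "u \<in> Wset" and b: "b \<in> nb E u"
  shows "b \<in> Wset"
proof (rule ccontr)
  assume "b \<notin> Wset"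
  moreover have bV: "b \<in> V" using nb_in[OF s b] by blast
  ultimately have "b \<in> Uset" by (simp add: Wset_def)
  then obtain v where v: "v \<in> Dset" "b \<in> blk E v" by (auto simp: Uset_def)
  then have "u \<in> blk E v" using blk_closed[of v b] b nb_sym by (auto simp: Dset_def)
  then have "u \<in> Uset" using v by (auto simp: Uset_def)
  then show False using u by (simp add: Wset_def)
qed

lemma W_even:
  assumes reg: "\<forall>u\<in>Wset. card (nb E u) = k"
  shows "even (k * card Wset)"
proof -
  have fW: "finite Wset" using fV by (simp add: Wset_def)
  have "k * card Wset = (\<Sum>u\<in>Wset. card (nb E u))" using reg by simp
  also have "\<dots> = card (SIGMA u:Wset. nb E u)"
    using card_SigmaI[OF fW, of "nb E"] finite_nb[OF s] by simp
  finally have eq: "k * card Wset = card (SIGMA u:Wset. nb E u)" .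
  have "even (card (SIGMA u:Wset. nb E u))"
  proof (rule even_sym_card)
    show "finite (SIGMA u:Wset. nb E u)" using fW finite_nb[OF s] by simp
    show "\<And>a b. (a, b) \<in> (SIGMA u:Wset. nb E u) \<Longrightarrow> (b, a) \<in> (SIGMA u:Wset. nb E u)"
      using W_closed nb_sym by blast
    show "\<And>a. (a, a) \<notin> (SIGMA u:Wset. nb E u)" using nb_in[OF s] by blast
  qed
  then show ?thesis using eq by simp
qed

end

context noTp begin

lemma upper_i:
  assumes N: "card V = m + n - 5" and nm: "n \<ge> m + 1" and m7: "m \<ge> 7" and nd: "\<not> (m - 1) dvd card V"
  shows "contains (V, all_pairs V - E) (T1 n) \<and> contains (V, all_pairs V - E) (T2 n)"
proof (cases "\<exists>v\<in>V. card (nb E v) \<ge> m - 1")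
  case True
  then obtain v where "card (nb E v) \<ge> m - 1" by blast
  then show ?thesis using caseA N nm m7 by simp
next
  case False
  then have md: "\<forall>v\<in>V. card (nb E v) \<le> m - 2" by force
  have "Wset \<noteq> {}"
  proof
    assume "Wset = {}"
    then have "card V = (m - 1) * card (blk E ` Dset)" using card_VUW card_U by simp
    then show False using nd by simp
  qed
  then obtain u where uW: "u \<in> Wset" by blast
  have u: "u \<in> V" using uW by (simp add: Wset_def)
  have du: "card (nb E u) \<le> m - 3" using W_deg[OF md uW] .
  have chb: "\<And>w. w \<in> V \<Longrightarrow> card (hb V E w) = card V - 1 - card (nb E w)" using card_hb[OF s] by blast
  have kH: "\<forall>w\<in>V. card (hb V E w) \<ge> 4"
  proof
    fix w assume w: "w \<in> V"
    have "card (nb E w) \<le> m - 2" using md w by blast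
    then show "card (hb V E w) \<ge> 4" using chb[OF w] N nm m7 by arith
  qed
  show ?thesis
  proof (cases "card (hb V E u) \<ge> n - 2")
    case True
    show ?thesis
    proof (rule centre[OF u kH True])
      show "n \<ge> 5" using nm m7 by simp
      show "nb E u = {} \<Longrightarrow> card (hb V E u) \<ge> n - 1" using chb[OF u] N m7 by simp
      show "\<forall>w\<in>V. card (nb E w) \<le> card (hb V E u)"
      proof
        fix w assume "w \<in> V"
        then have "card (nb E w) \<le> m - 2" using md by blast
        then show "card (nb E w) \<le> card (hb V E u)" using True nm by arith
      qed
    qed
  next
    case False
    have hu: "card (hb V E u) = n - 3" "card (nb E u) = m - 3" using False chb[OF u] du N nm m7 by arith+
    have cnt: "card (hb V E u) * (card (nb E u) - 1) > card (nb E u) * (m - 4)"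
    proof -
      have "(m - 3) * (m - 4) < (n - 3) * (m - 4)" using nm m7 by (intro mult_strict_right_mono) auto
      then show ?thesis using hu by (simp add: mult.commute)
    qed
    show ?thesis
    proof (rule sub3[OF u _ _ _ _ _ cnt])
      show "n \<ge> 5" using nm m7 by simp
      show "\<forall>b\<in>nb E u. card (nb E b) \<le> m - 3" using W_closed[OF uW] W_deg[OF md] by blast
    qed (use hu nm m7 in simp_all)
  qed
qed

end

lemma cnt_ii: "(m::nat) \<ge> 8 \<Longrightarrow> (m - 4) * (m - 4) < (m - 2) * (m - 5)"
proof -
  assume "m \<ge> 8"
  then obtain k where k: "m = k + 8" by (metis add.commute le_add_diff_inverse)
  show ?thesis unfolding k by (simp add: algebra_simps)
qed

context noTp begin

lemma upper_ii:
  assumes N: "card V = 2 * m - 5" and nm: "n = m + 1" and m8: "m \<ge> 8" and ev: "even m"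
  shows "contains (V, all_pairs V - E) (T1 n) \<and> contains (V, all_pairs V - E) (T2 n)"
proof (cases "\<exists>v\<in>V. card (nb E v) \<ge> m - 1")
  case True
  then obtain v where "card (nb E v) \<ge> m - 1" by blast
  then show ?thesis using caseA N nm m8 by simp
next
  case False
  then have md: "\<forall>v\<in>V. card (nb E v) \<le> m - 2" by force
  have chb: "\<And>w. w \<in> V \<Longrightarrow> card (hb V E w) = card V - 1 - card (nb E w)" using card_hb[OF s] by blast
  have kH: "\<forall>w\<in>V. card (hb V E w) \<ge> 4"
  proof
    fix w assume w: "w \<in> V"
    have "card (nb E w) \<le> m - 2" using md w by blast
    then show "card (hb V E w) \<ge> 4" using chb[OF w] N nm m8 by arith
  qed
  show ?thesis
  proof (cases "\<exists>u\<in>Wset. card (nb E u) \<le> m - 4")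
    case True
    then obtain u where uW: "u \<in> Wset" and du: "card (nb E u) \<le> m - 4" by blast
    have u: "u \<in> V" using uW by (simp add: Wset_def)
    show ?thesis
    proof (cases "card (hb V E u) \<ge> n - 2")
      case True
      show ?thesis
      proof (rule centre[OF u kH True])
        show "n \<ge> 5" using nm m8 by simp
        show "nb E u = {} \<Longrightarrow> card (hb V E u) \<ge> n - 1" using chb[OF u] N m8 nm by simp
        show "\<forall>w\<in>V. card (nb E w) \<le> card (hb V E u)"
        proof
          fix w assume "w \<in> V"
          then have "card (nb E w) \<le> m - 2" using md by blast
          then show "card (nb E w) \<le> card (hb V E u)" using True nm by arith
        qed
      qed
    next
      case False
      have hu: "card (hb V E u) = m - 2" "card (nb E u) = m - 4" using False chb[OF u] du N nm m8 by arith+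
      have cnt: "card (hb V E u) * (card (nb E u) - 1) > card (nb E u) * (m - 4)"
        using cnt_ii[OF m8] hu by (simp add: mult.commute)
      show ?thesis
      proof (rule sub3[OF u _ _ _ _ _ cnt])
        show "n \<ge> 5" using nm m8 by simp
        show "\<forall>b\<in>nb E u. card (nb E b) \<le> m - 3" using W_closed[OF uW] W_deg[OF md] by blast
      qed (use hu nm m8 in simp_all)
    qed
  next
    case False
    have reg: "\<forall>u\<in>Wset. card (nb E u) = m - 3" using False W_deg[OF md] by force
    have evW: "even ((m - 3) * card Wset)" using W_even[OF reg] .
    have oddm3: "odd (m - 3)" using ev m8 by simp
    then have evW': "even (card Wset)" using evW by simp
    define k where "k = card (blk E ` Dset)"
    have NV: "2 * m - 5 = (m - 1) * k + card Wset" using card_VUW card_U N k_def by simp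
    show ?thesis
    proof (cases "k = 0")
      case True
      then have "card Wset = 2 * m - 5" using NV by simp
      then show ?thesis using evW' m8 by presburger
    next
      case False
      show ?thesis
      proof (cases "k = 1")
        case True
        then have cW: "card Wset = m - 4" using NV m8 by simp
        then have "Wset \<noteq> {}" using m8 by auto
        then obtain u where uW: "u \<in> Wset" by blast
        have "insert u (nb E u) \<subseteq> Wset" using W_closed[OF uW] uW by blast
        then have "card (insert u (nb E u)) \<le> card Wset" using fV by (intro card_mono) (auto simp: Wset_def)
        moreover have "u \<notin> nb E u" using nb_in[OF s] by blast
        ultimately have "card (nb E u) + 1 \<le> card Wset" using finite_nb[OF s] by simp
        then show ?thesis using reg uW cW m8 by force
      next
        case False
        then have "k \<ge> 2" using \<open>k \<noteq> 0\<close> by simp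
        then have "(m - 1) * 2 \<le> (m - 1) * k" by simp
        then show ?thesis using NV m8 by linarith
      qed
    qed
  qed
qed

end

lemma no_Tp:
  assumes s: "simple_graph (V, E)" and m: "m \<ge> 4"
    and dg: "\<forall>v\<in>V. card (nb E v) \<le> m - 3 \<or>
                 (card (nb E v) = m - 2 \<and> (\<forall>x\<in>nb E v. nb E x \<subseteq> insert v (nb E v)))"
  shows "\<not> contains (V, E) (Tprime m)"
proof
  assume "contains (V, E) (Tprime m)"
  then obtain f where inj: "inj_on f {0..<m}" and img: "f ` {0..<m} \<subseteq> V"
    and ed: "\<forall>e\<in>snd (Tprime m). f ` e \<in> E"
    unfolding contains_def by (auto simp: Tprime_def)
  define v where "v = f 0"
  have vV: "v \<in> V" using img m by (auto simp: v_def)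
  have sub: "f ` {1..m-2} \<subseteq> nb E v"
  proof
    fix y assume "y \<in> f ` {1..m-2}"
    then obtain i where i: "1 \<le> i" "i \<le> m - 2" "y = f i" by auto
    have "{0, i} \<in> snd (Tprime m)" using i by (auto simp: Tprime_def)
    then have "f ` {0, i} \<in> E" using ed by blast
    then have "{f 0, f i} \<in> E" by simp
    then show "y \<in> nb E v" using i by (simp add: nb_def v_def)
  qed
  have "{1..m-2} \<subseteq> {0..<m}" using m by auto
  then have cimg: "card (f ` {1..m-2}) = m - 2"
    using inj_on_subset[OF inj] m by (subst card_image) auto
  have "card (nb E v) \<ge> m - 2" using card_mono[OF finite_nb[OF s] sub] cimg by simp
  moreover have "card (nb E v) \<le> m - 3 \<or>
                 (card (nb E v) = m - 2 \<and> (\<forall>x\<in>nb E v. nb E x \<subseteq> insert v (nb E v)))"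
    using dg vV by blast
  ultimately have d2: "card (nb E v) = m - 2" and cl: "\<forall>x\<in>nb E v. nb E x \<subseteq> insert v (nb E v)"
    using m by auto
  have eq: "nb E v = f ` {1..m-2}" using card_subset_eq[OF finite_nb[OF s] sub] cimg d2 by simp
  have "{1, m - 1} \<in> snd (Tprime m)" by (simp add: Tprime_def)
  then have "f ` {1, m - 1} \<in> E" using ed by blast
  then have "{f 1, f (m - 1)} \<in> E" by simp
  then have "f (m - 1) \<in> nb E (f 1)" by (simp add: nb_def)
  moreover have "1 \<in> {1..m-2}" using m by simp
  then have "f 1 \<in> nb E v" using sub by blast
  ultimately have "f (m - 1) \<in> insert v (nb E v)" using cl by blast
  then have "f (m - 1) = f 0 \<or> f (m - 1) \<in> f ` {1..m-2}" using eq by (simp add: v_def)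
  then have "\<exists>i. i \<le> m - 2 \<and> f (m - 1) = f i"
  proof
    assume "f (m - 1) = f 0" then show ?thesis by blast
  next
    assume "f (m - 1) \<in> f ` {1..m-2}"
    then obtain i where "i \<in> {1..m-2}" "f (m - 1) = f i" by blast
    then show ?thesis by auto
  qed
  then obtain i where i: "i \<le> m - 2" "f (m - 1) = f i" by blast
  have "m - 1 \<in> {0..<m}" "i \<in> {0..<m}" using i m by auto
  then have "m - 1 = i" using inj_onD[OF inj i(2)] by blast
  then show False using i m by simp
qed

lemma fst_Tj: "fst (Tj j n) = {0..<n}" by (simp add: Tj_def T1_def T2_def)

lemma no_Tj:
  assumes s: "simple_graph (V, E)" and n: "n \<ge> 4"
    and dg: "\<forall>v\<in>V. card (hb V E v) \<le> n - 4"
  shows "\<not> contains (V, all_pairs V - E) (Tj j n)"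
proof
  assume "contains (V, all_pairs V - E) (Tj j n)"
  then obtain f where inj: "inj_on f {0..<n}" and img: "f ` {0..<n} \<subseteq> V"
    and ed: "\<forall>e\<in>snd (Tj j n). f ` e \<in> all_pairs V - E"
    unfolding contains_def by (auto simp: fst_Tj)
  define v where "v = f 0"
  have vV: "v \<in> V" using img n by (auto simp: v_def)
  have sub: "f ` {1..n-3} \<subseteq> hb V E v"
  proof
    fix y assume "y \<in> f ` {1..n-3}"
    then obtain i where i: "1 \<le> i" "i \<le> n - 3" "y = f i" by auto
    have "{0, i} \<in> snd (Tj j n)" using i by (auto simp: Tj_def T1_def T2_def)
    then have "f ` {0, i} \<in> all_pairs V - E" using ed by blast
    then have "{f 0, f i} \<in> all_pairs V - E" by simp
    then show "y \<in> hb V E v" using i all_pairs_iff by (auto simp: hb_def v_def)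
  qed
  have "{1..n-3} \<subseteq> {0..<n}" using n by auto
  then have cimg: "card (f ` {1..n-3}) = n - 3"
    using inj_on_subset[OF inj] n by (subst card_image) auto
  have fin: "finite (hb V E v)" using s by (auto simp: simple_graph_def hb_def)
  have "card (hb V E v) \<ge> n - 3" using card_mono[OF fin sub] cimg by simp
  moreover have "card (hb V E v) \<le> n - 4" using dg vV by blast
  ultimately show False using n by linarith
qed

definition cS :: "nat \<Rightarrow> nat \<Rightarrow> nat set" where
  "cS M d = {s. 0 < s \<and> s < M \<and> (s \<le> d div 2 \<or> M - s \<le> d div 2 \<or> (odd d \<and> 2 * s = M))}"

definition cR :: "nat \<Rightarrow> nat \<Rightarrow> nat \<Rightarrow> nat \<Rightarrow> bool" where
  "cR M d i j = (nat ((int j - int i) mod int M) \<in> cS M d)"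

definition lbE :: "nat \<Rightarrow> nat \<Rightarrow> nat \<Rightarrow> nat set set" where
  "lbE M b d = {{i, j} | i j. i < M \<and> j < M \<and> cR M d i j} \<union>
               {{i, j} | i j. M \<le> i \<and> i < M + b \<and> M \<le> j \<and> j < M + b \<and> i \<noteq> j}"

lemma cS_sym: "s \<in> cS M d \<Longrightarrow> M - s \<in> cS M d"
  unfolding cS_def by auto

lemma cS_pos: "s \<in> cS M d \<Longrightarrow> 0 < s \<and> s < M" unfolding cS_def by auto

lemma cR_irr: "\<not> cR M d i i"
  unfolding cR_def using cS_pos by fastforce

lemma cR_sym:
  assumes "cR M d i j" shows "cR M d j i"
proof -
  define t where "t = (int j - int i) mod int M"
  have ts: "nat t \<in> cS M d" using assms by (simp add: cR_def t_def)
  then have tp: "0 < nat t" "nat t < M" using cS_pos by blast+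
  then have M0: "int M > 0" by simp
  have t0: "t \<noteq> 0" using tp by auto
  have tr: "0 \<le> t" "t < int M" using M0 by (simp_all add: t_def)
  have "(- (int j - int i)) mod int M = int M - t"
    using zmod_zminus1_eq_if[of "int j - int i" "int M"] t0 unfolding t_def by presburger
  then have "(int i - int j) mod int M = int M - t" by simp
  then have "nat ((int i - int j) mod int M) = M - nat t" using tr by simp
  then show ?thesis using cS_sym[OF ts] by (simp add: cR_def)
qed

lemma lbE_iff: "{x, y} \<in> lbE M b d \<longleftrightarrow> (x < M \<and> y < M \<and> cR M d x y) \<or>
    (M \<le> x \<and> x < M + b \<and> M \<le> y \<and> y < M + b \<and> x \<noteq> y)"
  unfolding lbE_def using cR_sym by (auto simp: doubleton_eq_iff)

lemma lbE_simple: "simple_graph ({0..<M + b}, lbE M b d)"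
  unfolding simple_graph_def
proof (intro conjI)
  show "finite (fst ({0..<M + b}, lbE M b d))" by simp
  show "snd ({0..<M + b}, lbE M b d) \<subseteq> all_pairs (fst ({0..<M + b}, lbE M b d))"
  proof
    fix e assume "e \<in> snd ({0..<M + b}, lbE M b d)"
    then show "e \<in> all_pairs (fst ({0..<M + b}, lbE M b d))"
      unfolding lbE_def all_pairs_def using cR_irr by auto (metis add.commute trans_less_add2)
  qed
qed

lemma nb_circ: "x < M \<Longrightarrow> nb (lbE M b d) x = {y. y < M \<and> cR M d x y}"
  unfolding nb_def lbE_iff by auto

lemma nb_block: "M \<le> x \<Longrightarrow> x < M + b \<Longrightarrow> nb (lbE M b d) x = {M..<M + b} - {x}"
  unfolding nb_def lbE_iff by auto

lemma card_circ_nb: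
  assumes x: "x < M"
  shows "card {y. y < M \<and> cR M d x y} = card (cS M d)"
proof -
  define phi where "phi y = nat ((int y - int x) mod int M)" for y
  have M0: "int M > 0" using x by simp
  have inj: "inj_on phi {y. y < M \<and> cR M d x y}"
  proof (rule inj_onI)
    fix y y' assume y: "y \<in> {y. y < M \<and> cR M d x y}" and y': "y' \<in> {y. y < M \<and> cR M d x y}"
      and eq: "phi y = phi y'"
    have "(int y - int x) mod int M = (int y' - int x) mod int M"
      using eq M0 unfolding phi_def by (metis Euclidean_Rings.pos_mod_sign eq_nat_nat_iff)
    then have "int M dvd (int y - int x) - (int y' - int x)" by (simp add: mod_eq_dvd_iff)
    then have "int M dvd int y - int y'" by simp
    then have "int y mod int M = int y' mod int M" by (simp add: mod_eq_dvd_iff)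
    then show "y = y'" using y y' by simp
  qed
  have img: "phi ` {y. y < M \<and> cR M d x y} = cS M d"
  proof
    show "phi ` {y. y < M \<and> cR M d x y} \<subseteq> cS M d" by (auto simp: phi_def cR_def)
    show "cS M d \<subseteq> phi ` {y. y < M \<and> cR M d x y}"
    proof
      fix s assume s: "s \<in> cS M d"
      have sl: "s < M" using cS_pos[OF s] by simp
      define y where "y = (x + s) mod M"
      have yl: "y < M" using M0 by (simp add: y_def)
      have "(int y - int x) mod int M = ((int x + int s) mod int M - int x) mod int M"
        by (simp add: y_def zmod_int)
      also have "\<dots> = int s mod int M" by (simp add: mod_diff_left_eq)
      also have "\<dots> = int s" using sl by simp
      finally have py: "phi y = s" by (simp add: phi_def)
      then have "cR M d x y" using s by (simp add: cR_def phi_def)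
      then show "s \<in> phi ` {y. y < M \<and> cR M d x y}" using yl py by force
    qed
  qed
  show ?thesis using card_image[OF inj] img by simp
qed

lemma card_cS:
  assumes dM: "d < M" and par: "even d \<or> even M"
  shows "card (cS M d) = d"
proof -
  define h where "h = d div 2"
  define X where "X = (if odd d then {M div 2} else {})"
  have hM: "2 * h < M" using dM by (simp add: h_def)
  have eq: "cS M d = ({1..h} \<union> {M - h..<M}) \<union> X"
  proof (cases "odd d")
    case True
    then have "even M" using par by simp
    then show ?thesis using True hM unfolding cS_def X_def h_def by (auto elim!: evenE)
  next
    case False
    then show ?thesis using hM unfolding cS_def X_def h_def by auto
  qed
  have d1: "{1..h} \<inter> {M - h..<M} = {}" using hM by auto
  have c1: "card ({1..h} \<union> {M - h..<M}) = h + h"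
    using d1 hM by (subst card_Un_disjoint) auto
  show ?thesis
  proof (cases "odd d")
    case True
    then have "even M" using par by simp
    then have "M div 2 \<notin> {1..h} \<union> {M - h..<M}" using True hM dM
      by (auto simp: h_def elim!: evenE oddE)
    then have "card (cS M d) = h + h + 1" using eq c1 True by (simp add: X_def)
    then show ?thesis using True by (simp add: h_def) presburger
  next
    case False
    then show ?thesis using eq c1 by (simp add: X_def h_def) presburger
  qed
qed

lemma lower_graph:
  assumes m: "m \<ge> 4" and n: "n \<ge> 4" and dM: "m - 3 < M" and par: "even (m - 3) \<or> even M"
    and b: "b = 0 \<or> b = m - 1" and hc: "M + b - 1 - (m - 3) \<le> n - 4" and hb: "b > 0 \<Longrightarrow> M \<le> n - 4"
  shows "simple_graph ({0..<M + b}, lbE M b (m - 3)) \<and> \<not> contains ({0..<M + b}, lbE M b (m - 3)) (Tprime m)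
     \<and> \<not> contains (complement ({0..<M + b}, lbE M b (m - 3))) (Tj j n)"
proof -
  define E where "E = lbE M b (m - 3)"
  define V where "V = {0..<M + b}"
  have s: "simple_graph (V, E)" using lbE_simple by (simp add: E_def V_def)
  have dc: "card (nb E x) = m - 3" if "x < M" for x
    using that nb_circ card_circ_nb card_cS[OF dM par] by (simp add: E_def)
  have db: "card (nb E x) = b - 1" if "M \<le> x" "x < M + b" for x
    using that nb_block by (simp add: E_def)
  have t1: "\<not> contains (V, E) (Tprime m)"
  proof (rule no_Tp[OF s m], intro ballI)
    fix v assume v: "v \<in> V"
    show "card (nb E v) \<le> m - 3 \<or>
        (card (nb E v) = m - 2 \<and> (\<forall>x\<in>nb E v. nb E x \<subseteq> insert v (nb E v)))"
    proof (cases "v < M")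
      case True then show ?thesis using dc by simp
    next
      case False
      then have vb: "M \<le> v" "v < M + b" using v by (auto simp: V_def)
      then have "b = m - 1" using b by auto
      moreover have "\<forall>x\<in>nb E v. nb E x \<subseteq> insert v (nb E v)"
      proof
        fix x assume "x \<in> nb E v"
        then have x: "M \<le> x" "x < M + b" using nb_block[OF vb] by (auto simp: E_def)
        show "nb E x \<subseteq> insert v (nb E v)" using nb_block[OF x] nb_block[OF vb] by (auto simp: E_def)
      qed
      ultimately show ?thesis using db[OF vb] by (simp add: numeral_2_eq_2)
    qed
  qed
  have t2: "\<not> contains (V, all_pairs V - E) (Tj j n)"
  proof (rule no_Tj[OF s n], intro ballI)
    fix v assume v: "v \<in> V"
    have "card (hb V E v) = card V - 1 - card (nb E v)" using card_hb[OF s v] .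
    then show "card (hb V E v) \<le> n - 4"
    proof (cases "v < M")
      case True then show ?thesis using dc[OF True] hc \<open>card (hb V E v) = _\<close> by (simp add: V_def)
    next
      case False
      then have vb: "M \<le> v" "v < M + b" using v by (auto simp: V_def)
      then have "b > 0" by simp
      then show ?thesis using db[OF vb] hb \<open>card (hb V E v) = _\<close> by (simp add: V_def)
    qed
  qed
  show ?thesis using s t1 t2 by (simp add: E_def V_def complement_def)
qed

definition RP :: "graph \<Rightarrow> graph \<Rightarrow> nat \<Rightarrow> bool" where
  "RP G1 G2 N = (\<forall>E. simple_graph ({0..<N}, E) \<longrightarrow>
          contains ({0..<N}, E) G1 \<or> contains (complement ({0..<N}, E)) G2)"

lemma contains_mono:
  assumes "contains (V, E) X" "V \<subseteq> V'" "E \<subseteq> E'"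
  shows "contains (V', E') X"
  using assms unfolding contains_def by (auto 0 3)

lemma RP_mono:
  assumes P: "RP G1 G2 N" and NN: "N \<le> N'"
  shows "RP G1 G2 N'"
  unfolding RP_def
proof (intro allI impI)
  fix E' assume s': "simple_graph ({0..<N'}, E')"
  define E where "E = E' \<inter> all_pairs {0..<N}"
  have s: "simple_graph ({0..<N}, E)" by (simp add: simple_graph_def E_def)
  have VV: "{0..<N} \<subseteq> {0..<N'}" using NN by auto
  have "contains ({0..<N}, E) G1 \<or> contains (complement ({0..<N}, E)) G2"
    using P s unfolding RP_def by blast
  then show "contains ({0..<N'}, E') G1 \<or> contains (complement ({0..<N'}, E')) G2"
  proof
    assume "contains ({0..<N}, E) G1"
    then show ?thesis using contains_mono[OF _ VV] by (metis E_def inf_le1)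
  next
    assume "contains (complement ({0..<N}, E)) G2"
    then have c: "contains ({0..<N}, all_pairs {0..<N} - E) G2" by (simp add: complement_def)
    have "all_pairs {0..<N} - E \<subseteq> all_pairs {0..<N'} - E'"
      using all_pairs_mono[OF VV] by (auto simp: E_def)
    then have "contains ({0..<N'}, all_pairs {0..<N'} - E') G2" using contains_mono[OF c VV] by blast
    then show ?thesis by (simp add: complement_def)
  qed
qed

lemma ramsey_eqI:
  assumes K: "K > 0" and up: "RP G1 G2 K"
    and low: "simple_graph ({0..<K - 1}, E) \<and> \<not> contains ({0..<K - 1}, E) G1
              \<and> \<not> contains (complement ({0..<K - 1}, E)) G2"
  shows "ramsey G1 G2 = K"
proof -
  have nl: "\<not> RP G1 G2 (K - 1)" using low unfolding RP_def by blast
  show ?thesis unfolding ramsey_def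
  proof (rule Least_equality)
    show "0 < K \<and> (\<forall>E. simple_graph ({0..<K}, E) \<longrightarrow>
          contains ({0..<K}, E) G1 \<or> contains (complement ({0..<K}, E)) G2)"
      using K up by (simp add: RP_def)
    fix y assume "0 < y \<and> (\<forall>E. simple_graph ({0..<y}, E) \<longrightarrow>
          contains ({0..<y}, E) G1 \<or> contains (complement ({0..<y}, E)) G2)"
    then have "RP G1 G2 y" by (simp add: RP_def)
    show "K \<le> y"
    proof (rule ccontr)
      assume "\<not> K \<le> y"
      then have "y \<le> K - 1" by simp
      then have "RP G1 G2 (K - 1)" using RP_mono \<open>RP G1 G2 y\<close> by blast
      then show False using nl by simp
    qed
  qed
qed

lemma RP_from_upper:
  assumes m: "m \<ge> 4"
    and up: "\<And>E. noTp {0..<N} E m \<Longrightarrow>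
        contains ({0..<N}, all_pairs {0..<N} - E) (T1 n) \<and> contains ({0..<N}, all_pairs {0..<N} - E) (T2 n)"
  shows "RP (Tprime m) (Tj j n) N"
  unfolding RP_def
proof (intro allI impI)
  fix E assume s: "simple_graph ({0..<N}, E)"
  show "contains ({0..<N}, E) (Tprime m) \<or> contains (complement ({0..<N}, E)) (Tj j n)"
  proof (cases "contains ({0..<N}, E) (Tprime m)")
    case False
    then have "noTp {0..<N} E m" using s m by (simp add: noTp_def)
    then show ?thesis using up by (simp add: complement_def Tj_def)
  qed simp
qed

lemma ramsey_from:
  assumes K: "K > 0" and up: "RP (Tprime m) (Tj j n) K" and KM: "K - 1 = M + b"
    and m: "m \<ge> 4" and n: "n \<ge> 4" and dM: "m - 3 < M" and par: "even (m - 3) \<or> even M"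
    and b: "b = 0 \<or> b = m - 1" and hc: "M + b - 1 - (m - 3) \<le> n - 4" and hb: "b > 0 \<Longrightarrow> M \<le> n - 4"
  shows "ramsey (Tprime m) (Tj j n) = K"
  using lower_graph[OF m n dM par b hc hb, of j] KM by (intro ramsey_eqI[OF K up]) simp

lemma part1:
  assumes "odd m" "m \<ge> 9"
  shows "ramsey (Tprime m) (Tj j (m + 1)) = 2 * m - 4"
proof (rule ramsey_from[where M = "2 * m - 5" and b = 0])
  show "RP (Tprime m) (Tj j (m + 1)) (2 * m - 4)"
  proof (rule RP_from_upper)
    fix E assume "noTp {0..<2 * m - 4} E m"
    moreover have "\<not> (m - 1) dvd (2 * m - 4)"
    proof
      assume "(m - 1) dvd (2 * m - 4)"
      then have "(m - 1) dvd (2 * m - 4 - (m - 1))" by (rule dvd_diff_nat) simp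
      moreover have "2 * m - 4 - (m - 1) = m - 3" using assms by simp
      ultimately have "(m - 1) dvd (m - 3)" by simp
      then have "m - 1 \<le> m - 3" using assms by (intro dvd_imp_le) auto
      then show False using assms by simp
    qed
    ultimately show "contains ({0..<2 * m - 4}, all_pairs {0..<2 * m - 4} - E) (T1 (m + 1)) \<and>
       contains ({0..<2 * m - 4}, all_pairs {0..<2 * m - 4} - E) (T2 (m + 1))"
    proof -
      have c: "card {0..<2 * m - 4} = m + (m + 1) - 5" using assms by simp
      show ?thesis using noTp.upper_i[OF \<open>noTp {0..<2 * m - 4} E m\<close> c] assms
        \<open>\<not> (m - 1) dvd (2 * m - 4)\<close> by simp
    qed
  qed (use assms in simp)
qed (use assms in auto)

lemma part2:
  assumes "even m" "m \<ge> 16"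
  shows "ramsey (Tprime m) (Tj j (m + 1)) = 2 * m - 5"
proof (rule ramsey_from[where M = "2 * m - 6" and b = 0])
  show "RP (Tprime m) (Tj j (m + 1)) (2 * m - 5)"
  proof (rule RP_from_upper)
    fix E assume "noTp {0..<2 * m - 5} E m"
    then show "contains ({0..<2 * m - 5}, all_pairs {0..<2 * m - 5} - E) (T1 (m + 1)) \<and>
       contains ({0..<2 * m - 5}, all_pairs {0..<2 * m - 5} - E) (T2 (m + 1))"
      using noTp.upper_ii[of "{0..<2 * m - 5}" E m "m + 1"] assms by simp
  qed (use assms in simp)
qed (use assms in auto)

lemma part3:
  assumes m7: "m \<ge> 7" and nm: "n \<ge> m + 2" and nd: "\<not> (m - 1) dvd (n - 4)"
  shows "ramsey (Tprime m) (Tj j n) = m + n - 5"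
proof -
  have up: "RP (Tprime m) (Tj j n) (m + n - 5)"
  proof (rule RP_from_upper)
    fix E assume "noTp {0..<m + n - 5} E m"
    moreover have "\<not> (m - 1) dvd (m + n - 5)"
    proof
      assume "(m - 1) dvd (m + n - 5)"
      then have "(m - 1) dvd (m + n - 5 - (m - 1))" by (rule dvd_diff_nat) simp
      moreover have "m + n - 5 - (m - 1) = n - 4" using m7 nm by simp
      ultimately show False using nd by simp
    qed
    ultimately show "contains ({0..<m + n - 5}, all_pairs {0..<m + n - 5} - E) (T1 n) \<and>
       contains ({0..<m + n - 5}, all_pairs {0..<m + n - 5} - E) (T2 n)"
      using noTp.upper_i[of "{0..<m + n - 5}" E m n] m7 nm by simp
  qed (use m7 in simp)
  show ?thesis
  proof (cases "even (m - 3) \<or> even (m + n - 6)")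
    case True
    show ?thesis
      by (rule ramsey_from[where M = "m + n - 6" and b = 0, OF _ up]) (use True m7 nm in auto)
  next
    case False
    have ev: "even (n - 5)" using False m7 nm by auto
    have "n \<noteq> m + 2" using False m7 by auto
    then have n3: "n \<ge> m + 3" using nm by simp
    show ?thesis
      by (rule ramsey_from[where M = "n - 5" and b = "m - 1", OF _ up]) (use ev n3 m7 in auto)
  qed
qed

theorem theorem6p3:
  fixes m n j :: nat
  assumes "j \<in> {1, 2}"
  shows "(odd m \<and> m \<ge> 9 \<longrightarrow> ramsey (Tprime m) (Tj j (m + 1)) = 2 * m - 4)
       \<and> (even m \<and> m \<ge> 16 \<longrightarrow> ramsey (Tprime m) (Tj j (m + 1)) = 2 * m - 5)
       \<and> (m \<ge> 7 \<and> n \<ge> max (m + 2) (19 - m) \<and> \<not> (m - 1) dvd (n - 4)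
            \<longrightarrow> ramsey (Tprime m) (Tj j n) = m + n - 5)"
  using part1 part2 part3 by auto



end
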